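(* Let $s,t,r\in\mathbb{N}$ with $s\leqslant rt$ and $r\leqslant st$. The orbit space $V_{s,t,r}/U(r)$ (with the quotient topology) is homeomorphic to $\mathcal{C}_{s,t,r}$ (with the subspace topology from $\mathbb{C}^{st\times st}$).
   Context: $V_{s,t,r}$ is the set of matrices $V=[A_1;A_2;\dots;A_r]\in\mathbb{C}^{rt\times s}$ (vertical stacking of blocks $A_i\in\mathbb{C}^{t\times s}$) such that $V^{\ast}V=\sum_iA_i^{\ast}A_i=I$ and $A_1,\dots,A_r$ are linearly independent over $\mathbb{C}$. The unitary group $U(r)$ acts on $V_{s,t,r}$ by $U\cdot V=(U\otimes I_t)V$, and $V_{s,t,r}/U(r)$ is the set of orbits. $\mathcal{C}_{s,t,r}$ is the set of positive semi-definite $C_{AB}\in\mathbb{C}^{st\times st}$ on $\mathbb{C}^s\otimes\mathbb{C}^t$ of rank $r$ with $\mathrm{tr}_BC_{AB}=\frac1sI$. *)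

theory Defs
  imports "HOL-Analysis.Analysis"
begin

text \<open>Matrices of size m x n are elements of complex^'n^'m (row index 'm, column index 'n).
  Dimensions s,t,r are the cardinalities of finite index types 's,'t,'r.
  A matrix V in C^{rt x s} is indexed by rows ('r \<times> 't), block i = rows (i,_).\<close>

definition quotient_topology :: "'a topology \<Rightarrow> ('a \<times> 'a) set \<Rightarrow> 'a set topology" where
  "quotient_topology X R =
     topology (\<lambda>U. U \<subseteq> topspace X // R \<and> openin X (\<Union>U))"

definition cmat_mult :: "complex^'n::finite^'m::finite \<Rightarrow> complex^'p::finite^'n \<Rightarrow> complex^'p^'m" where
  "cmat_mult A B = (\<chi> i k. \<Sum>j\<in>UNIV. A$i$j * B$j$k)"

definition adjoint_mat :: "complex^'n::finite^'m::finite \<Rightarrow> complex^'m^'n" where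
  "adjoint_mat A = (\<chi> i j. cnj (A$j$i))"

definition cid :: "complex^'n::finite^'n" where
  "cid = (\<chi> i j. if i = j then 1 else 0)"

definition unitary_mat :: "complex^'n::finite^'n \<Rightarrow> bool" where
  "unitary_mat U \<longleftrightarrow> cmat_mult (adjoint_mat U) U = cid"

definition block :: "complex^'s::finite^('r::finite \<times> 't::finite) \<Rightarrow> 'r \<Rightarrow> complex^'s^'t" where
  "block V i = (\<chi> j k. V$(i,j)$k)"

definition clin_indep_mats :: "('r::finite \<Rightarrow> complex^'s::finite^'t::finite) \<Rightarrow> bool" where
  "clin_indep_mats A \<longleftrightarrow>
     (\<forall>c::'r \<Rightarrow> complex. (\<forall>j k. (\<Sum>i\<in>UNIV. c i * A i $ j $ k) = 0) \<longrightarrow> (\<forall>i. c i = 0))"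

definition V_set :: "(complex^'s::finite^('r::finite \<times> 't::finite)) set" where
  "V_set = {V. cmat_mult (adjoint_mat V) V = cid \<and> clin_indep_mats (block V)}"

text \<open>Action of U(r): (U \<otimes> I_t) V.\<close>
definition kron_id_act :: "complex^'r::finite^'r::finite \<Rightarrow> complex^'s::finite^('r \<times> 't::finite) \<Rightarrow> complex^'s^('r \<times> 't)" where
  "kron_id_act U V = (\<chi> p k. \<Sum>i'\<in>UNIV. U$(fst p)$i' * V$(i', snd p)$k)"

definition orbit_rel :: "((complex^'s::finite^('r::finite \<times> 't::finite)) \<times> (complex^'s^('r \<times> 't))) set" where
  "orbit_rel = {(V, W). V \<in> V_set \<and> W \<in> V_set \<and>
       (\<exists>U::complex^'r^'r. unitary_mat U \<and> W = kron_id_act U V)}"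

definition hermitian_mat :: "complex^'n::finite^'n \<Rightarrow> bool" where
  "hermitian_mat C \<longleftrightarrow> adjoint_mat C = C"

definition psd_mat :: "complex^'n::finite^'n \<Rightarrow> bool" where
  "psd_mat C \<longleftrightarrow> hermitian_mat C \<and>
     (\<forall>x::'n \<Rightarrow> complex. 0 \<le> Re (\<Sum>i\<in>UNIV. \<Sum>j\<in>UNIV. cnj (x i) * C$i$j * x j))"

definition cindep_cols :: "complex^'n::finite^'m::finite \<Rightarrow> 'n set \<Rightarrow> bool" where
  "cindep_cols C S \<longleftrightarrow>
     (\<forall>c::'n \<Rightarrow> complex. (\<forall>i. (\<Sum>j\<in>S. c j * C$i$j) = 0) \<longrightarrow> (\<forall>j\<in>S. c j = 0))"

definition crank :: "complex^('n::finite)^'m::finite \<Rightarrow> nat" where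
  "crank C = Max (card ` {S. cindep_cols C S})"

text \<open>Partial trace over the second factor of C^s \<otimes> C^t (index (a,b)).\<close>
definition partial_trace_B :: "complex^('s::finite \<times> 't::finite)^('s \<times> 't) \<Rightarrow> complex^'s^'s" where
  "partial_trace_B C = (\<chi> a a'. \<Sum>b\<in>UNIV. C$(a,b)$(a',b))"

definition C_set :: "'r::finite itself \<Rightarrow> (complex^('s::finite \<times> 't::finite)^('s \<times> 't)) set" where
  "C_set _ = {C. psd_mat C \<and> crank C = CARD('r) \<and>
       partial_trace_B C = (\<chi> a a'. if a = a' then 1 / of_nat CARD('s) else 0)}"

end

theory Submission
  imports Defs
begin



lemma cmat_mult_eq: "cmat_mult A B = A ** B"
  by (simp add: cmat_mult_def matrix_matrix_mult_def)

lemma cid_eq: "cid = mat 1"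
  by (simp add: cid_def mat_def)

lemma adj_mult: "adjoint_mat (A ** B) = adjoint_mat B ** adjoint_mat (A::complex^'n::finite^'m::finite)"
  by (simp add: vec_eq_iff adjoint_mat_def matrix_matrix_mult_def mult.commute)

lemma adj_adj[simp]: "adjoint_mat (adjoint_mat A) = A"
  by (simp add: vec_eq_iff adjoint_mat_def)

lemma adj_mat1[simp]: "adjoint_mat (mat 1 :: complex^'n::finite^'n) = mat 1"
  by (simp add: vec_eq_iff adjoint_mat_def mat_def)

definition cinner :: "complex^'n::finite \<Rightarrow> complex^'n \<Rightarrow> complex" where
  "cinner x y = (\<Sum>i\<in>UNIV. cnj (x$i) * y$i)"

lemma cinner_adj: "cinner x (adjoint_mat A *v y) = cinner (A *v x) y"
proof -
  have "cinner x (adjoint_mat A *v y) = (\<Sum>i\<in>UNIV. \<Sum>j\<in>UNIV. cnj (x$i) * (cnj (A$j$i) * y$j))"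
    by (simp add: cinner_def matrix_vector_mult_def adjoint_mat_def sum_distrib_left)
  also have "\<dots> = (\<Sum>j\<in>UNIV. \<Sum>i\<in>UNIV. cnj (A$j$i * x$i) * y$j)"
    by (subst sum.swap) (simp add: mult_ac)
  also have "\<dots> = cinner (A *v x) y"
    by (simp add: cinner_def matrix_vector_mult_def sum_distrib_right)
  finally show ?thesis .
qed

lemma cnj_mult_self: "cnj z * z = complex_of_real ((cmod z)^2)"
  by (metis complex_norm_square mult.commute)

lemma cinner_self: "cinner x x = of_real (\<Sum>i\<in>UNIV. (cmod (x$i))^2)"
  unfolding cinner_def of_real_sum by (rule sum.cong) (auto simp only: cnj_mult_self)

lemma cinner_self_eq0: "cinner x x = 0 \<Longrightarrow> x = 0"
proof -
  assume "cinner x x = 0"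
  then have "(\<Sum>i\<in>UNIV. (cmod (x$i))^2) = 0" unfolding cinner_self of_real_eq_0_iff .
  then have "\<forall>i\<in>UNIV. (cmod (x$i))^2 = 0" by (subst (asm) sum_nonneg_eq_0_iff) auto
  then show "x = 0" by (simp add: vec_eq_iff)
qed

lemma Re_cinner_self: "0 \<le> Re (cinner x x)"
  unfolding cinner_self Re_complex_of_real by (simp add: sum_nonneg)

lemma adjM_M_ker:
  fixes M :: "complex^'k::finite^'n::finite"
  assumes "(adjoint_mat M ** M) *v x = 0"
  shows "M *v x = 0"
proof -
  have "cinner (M *v x) (M *v x) = cinner x (adjoint_mat M *v (M *v x))"
    by (simp add: cinner_adj)
  also have "\<dots> = 0" using assms by (simp add: matrix_vector_mul_assoc cinner_def)
  finally show ?thesis by (rule cinner_self_eq0)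
qed

lemma gram_left_inv:
  fixes M :: "complex^'k::finite^'n::finite"
  assumes "\<forall>x. M *v x = 0 \<longrightarrow> x = 0"
  shows "\<exists>Gi. Gi ** (adjoint_mat M ** M) = mat 1 \<and> (adjoint_mat M ** M) ** Gi = mat 1"
proof -
  have "\<exists>Gi. Gi ** (adjoint_mat M ** M) = mat 1"
    unfolding matrix_left_invertible_ker using assms adjM_M_ker by blast
  then show ?thesis using matrix_left_right_inverse by blast
qed




definition ind_idx :: "('j \<Rightarrow> complex^'n::finite) \<Rightarrow> 'j set \<Rightarrow> bool" where
  "ind_idx f S \<longleftrightarrow> (\<forall>c. (\<Sum>j\<in>S. c j *s f j) = 0 \<longrightarrow> (\<forall>j\<in>S. c j = 0))"

lemma ind_idx_inj:
  assumes "ind_idx f S" "finite S"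
  shows "inj_on f S"
proof (rule inj_onI, rule ccontr)
  fix a b assume ab: "a \<in> S" "b \<in> S" "f a = f b" "a \<noteq> b"
  define c where "c j = (if j = a then 1 else if j = b then -1 else (0::complex))" for j
  have "(\<Sum>j\<in>S. c j *s f j) = (\<Sum>j\<in>{a,b}. c j *s f j)"
    by (rule sum.mono_neutral_right) (use ab assms(2) in \<open>auto simp: c_def\<close>)
  also have "\<dots> = 0" using ab by (simp add: c_def vec_eq_iff)
  finally have "c a = 0" using assms(1) ab unfolding ind_idx_def by blast
  then show False by (simp add: c_def)
qed

lemma ind_idx_indep:
  assumes "ind_idx f S" "finite S"
  shows "vec.independent (f ` S)"
proof
  assume "vec.dependent (f ` S)"
  moreover have "finite (f ` S)" using assms(2) by simp
  ultimately obtain u where u: "\<exists>v\<in>f ` S. u v \<noteq> 0" "(\<Sum>v\<in>f ` S. u v *s v) = 0"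
    using vec.dependent_finite[of "f ` S"] by auto
  have inj: "inj_on f S" by (rule ind_idx_inj[OF assms])
  have "(\<Sum>j\<in>S. u (f j) *s f j) = 0" using u(2) sum.reindex[OF inj, of "\<lambda>v. u v *s v"] by (simp add: o_def)
  then have "\<forall>j\<in>S. u (f j) = 0" using assms(1) unfolding ind_idx_def by (auto dest: spec[of _ "\<lambda>j. u (f j)"])
  then show False using u(1) by auto
qed

lemma ind_idxI:
  assumes "finite S" "inj_on f S" "vec.independent (f ` S)"
  shows "ind_idx f S"
  unfolding ind_idx_def
proof (intro allI impI ballI)
  fix c j assume c: "(\<Sum>j\<in>S. c j *s f j) = 0" and j: "j \<in> S"
  define u where "u v = c (inv_into S f v)" for v
  have "(\<Sum>v\<in>f ` S. u v *s v) = (\<Sum>j\<in>S. c j *s f j)"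
    by (simp add: sum.reindex[OF assms(2)] u_def inv_into_f_f[OF assms(2)])
  moreover have "finite (f ` S)" using assms(1) by simp
  ultimately have "\<forall>v\<in>f ` S. u v = 0" using c assms(3) vec.dependent_finite[of "f ` S"] by auto
  then show "c j = 0" using j by (auto simp: u_def inv_into_f_f[OF assms(2)])
qed

lemma cindep_cols_iff: "cindep_cols C S \<longleftrightarrow> ind_idx (\<lambda>j. column j C) S"
proof -
  have "(\<forall>i. (\<Sum>j\<in>S. c j * C$i$j) = 0) \<longleftrightarrow> (\<Sum>j\<in>S. c j *s column j C) = 0" for c
    by (simp add: vec_eq_iff sum_component column_def)
  then show ?thesis unfolding cindep_cols_def ind_idx_def by simp
qed

lemma crank_eqI:
  fixes C :: "complex^'n::finite^'m::finite"
  assumes "\<And>S. cindep_cols C S \<Longrightarrow> card S \<le> m" "cindep_cols C S0" "card S0 = m"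
  shows "crank C = m"
proof -
  have fin: "finite (card ` {S. cindep_cols C S})" by simp
  show ?thesis unfolding crank_def
    by (rule Max_eqI[OF fin]) (use assms in auto)
qed

lemma cinner_add_right: "cinner x (y + z) = cinner x y + cinner x z"
  by (simp add: cinner_def ring_distribs sum.distrib)

lemma if_mult_delta: "(if P then 1 else 0) * (y::complex) = (if P then y else 0)"
  by simp

lemma column_mult: "column j (A ** B) = A *v column j B"
  by (simp add: vec_eq_iff column_def matrix_matrix_mult_def matrix_vector_mult_def)

lemma rank_gram:
  fixes U :: "complex^'k::finite^'n::finite" and P :: "'k set"
  assumes zero: "\<And>p k. k \<notin> P \<Longrightarrow> U$p$k = 0"
    and inj: "\<And>x. (\<forall>k. k \<notin> P \<longrightarrow> x$k = 0) \<Longrightarrow> U *v x = 0 \<Longrightarrow> x = 0"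
  shows "crank (U ** adjoint_mat U) = card P"
proof -
  define C where "C = U ** adjoint_mat U"
  define cu where "cu k = column k U" for k
  define cc where "cc j = column j C" for j
  have cc_eq: "(\<lambda>j. column j C) = cc" by (simp add: cc_def fun_eq_iff)
  have cu0: "cu k = 0" if "k \<notin> P" for k using zero that by (simp add: cu_def column_def vec_eq_iff)
  have spanU: "U *v y \<in> vec.span (cu ` P)" for y
  proof -
    have "U *v y = (\<Sum>k\<in>UNIV. (y$k) *s cu k)" by (simp add: matrix_mult_sum cu_def)
    also have "\<dots> \<in> vec.span (cu ` P)"
    proof (rule vec.span_sum)
      fix k show "(y$k) *s cu k \<in> vec.span (cu ` P)"
        by (cases "k \<in> P") (auto simp: cu0 intro: vec.span_scale vec.span_base vec.span_zero)
    qed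
    finally show ?thesis .
  qed
  have ccspan: "cc j \<in> vec.span (cu ` P)" for j
    by (simp add: cc_def C_def column_mult spanU)
  have indP: "ind_idx cu P"
    unfolding ind_idx_def
  proof (intro allI impI ballI)
    fix c k assume c: "(\<Sum>j\<in>P. c j *s cu j) = 0" and k: "k \<in> P"
    define x where "x = (\<chi> k. if k \<in> P then c k else 0)"
    have "U *v x = (\<Sum>j\<in>UNIV. (x$j) *s cu j)" by (simp add: matrix_mult_sum cu_def)
    also have "\<dots> = (\<Sum>j\<in>P. c j *s cu j)"
      by (rule sum.mono_neutral_cong_right) (auto simp: x_def)
    finally have "x = 0" using c inj[of x] by (auto simp: x_def)
    then have "x $ k = 0" by simp
    then show "c k = 0" using k by (simp add: x_def)
  qed
  have injP: "inj_on cu P" by (rule ind_idx_inj[OF indP]) simp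
  have indT: "vec.independent (cu ` P)" by (rule ind_idx_indep[OF indP]) simp
  have cardT: "card (cu ` P) = card P" by (rule card_image[OF injP])
  have upper: "card S \<le> card P" if "cindep_cols C S" for S
  proof -
    have iS: "ind_idx cc S" using that by (simp add: cindep_cols_iff cc_eq)
    have "finite S" by simp
    have "card S = card (cc ` S)" using ind_idx_inj[OF iS] by (simp add: card_image)
    also have "\<dots> \<le> card (cu ` P)"
      using vec.independent_span_bound[of "cu ` P" "cc ` S"] ind_idx_indep[OF iS] ccspan by auto
    finally show ?thesis using cardT by simp
  qed
  \<comment> \<open>columns of U in span of columns of C\<close>
  define D :: "complex^'k^'k" where "D = (\<chi> i j. if i = j \<and> i \<notin> P then 1 else 0)"
  define G where "G = adjoint_mat U ** U + D"
  have Gker: "x = 0" if "G *v x = 0" for x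
  proof -
    have e1: "cinner x (G *v x) = cinner (U *v x) (U *v x) + cinner x (D *v x)"
    proof -
      have "G *v x = adjoint_mat U *v (U *v x) + D *v x"
        by (simp add: G_def matrix_vector_mult_add_rdistrib matrix_vector_mul_assoc)
      then show ?thesis by (simp add: cinner_add_right cinner_adj)
    qed
    have e2: "cinner x (D *v x) = of_real (\<Sum>i\<in>-P. (cmod (x$i))^2)"
    proof -
      have Dx: "(D *v x)$i = (if i \<in> P then 0 else x$i)" for i
        unfolding D_def matrix_vector_mult_def by (simp add: if_mult_delta)
      have "cinner x (D *v x) = (\<Sum>i\<in>UNIV. if i \<in> P then 0 else cnj (x$i) * x$i)"
        unfolding cinner_def Dx by (rule sum.cong) auto
      also have "\<dots> = (\<Sum>i\<in>-P. cnj (x$i) * x$i)"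
        by (simp add: sum.If_cases Compl_eq_Diff_UNIV)
      finally show ?thesis by (simp add: cnj_mult_self of_real_sum)
    qed
    have "Re (cinner x (G *v x)) = Re (cinner (U *v x) (U *v x)) + (\<Sum>i\<in>-P. (cmod (x$i))^2)"
      by (simp only: e1 e2 plus_complex.sel Re_complex_of_real)
    moreover have "cinner x (G *v x) = 0" using that by (simp add: cinner_def)
    ultimately have "0 = Re (cinner (U *v x) (U *v x)) + (\<Sum>i\<in>-P. (cmod (x$i))^2)"
      by simp
    moreover have "0 \<le> Re (cinner (U *v x) (U *v x))" by (rule Re_cinner_self)
    moreover have "0 \<le> (\<Sum>i\<in>-P. (cmod (x$i))^2)" by (simp add: sum_nonneg)
    ultimately have a: "Re (cinner (U *v x) (U *v x)) = 0" and b: "(\<Sum>i\<in>-P. (cmod (x$i))^2) = 0"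
      by linarith+
    have "cinner (U *v x) (U *v x) = 0" using a by (simp add: cinner_self)
    then have Ux: "U *v x = 0" by (rule cinner_self_eq0)
    have "\<forall>i\<in>-P. (cmod (x$i))^2 = 0" using b by (subst (asm) sum_nonneg_eq_0_iff) auto
    then have "\<forall>k. k \<notin> P \<longrightarrow> x$k = 0" by auto
    then show ?thesis using inj Ux by blast
  qed
  have "\<exists>Gi. Gi ** G = mat 1" unfolding matrix_left_invertible_ker using Gker by blast
  then obtain Gi where Gi: "Gi ** G = mat 1" by blast
  then have GGi: "G ** Gi = mat 1" using matrix_left_right_inverse by blast
  have UD: "U ** D = 0"
    unfolding vec_eq_iff matrix_matrix_mult_def D_def by (auto intro!: sum.neutral simp: zero)
  have "U ** G = C ** U"
    by (simp add: G_def C_def matrix_add_ldistrib UD matrix_mul_assoc)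
  then have UCW: "U = C ** (U ** Gi)"
  proof -
    assume h: "U ** G = C ** U"
    have "U = U ** (G ** Gi)" by (simp only: GGi matrix_mul_rid)
    also have "\<dots> = (U ** G) ** Gi" by (simp only: matrix_mul_assoc)
    also have "\<dots> = C ** (U ** Gi)" by (simp only: h matrix_mul_assoc)
    finally show ?thesis .
  qed
  have cuspan: "cu k \<in> vec.span (range cc)" for k
  proof -
    have "cu k = column k (C ** (U ** Gi))" unfolding cu_def by (subst UCW) (rule refl)
    also have "\<dots> = C *v column k (U ** Gi)" by (rule column_mult)
    also have "\<dots> = (\<Sum>j\<in>UNIV. (column k (U ** Gi) $ j) *s cc j)" by (simp add: matrix_mult_sum cc_def)
    also have "\<dots> \<in> vec.span (range cc)"
      by (rule vec.span_sum) (auto intro: vec.span_scale vec.span_base)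
    finally show ?thesis .
  qed
  obtain B where B: "B \<subseteq> range cc" "vec.independent B" "range cc \<subseteq> vec.span B"
    using vec.maximal_independent_subset by blast
  have finB: "finite B" using finite_subset[OF B(1)] by simp
  have "vec.span (range cc) \<subseteq> vec.span B"
    using vec.span_mono[OF B(3)] by (simp only: vec.span_span)
  then have "cu ` P \<subseteq> vec.span B"
    using cuspan by blast
  then have "finite (cu ` P) \<and> card (cu ` P) \<le> card B" by (rule vec.independent_span_bound[OF finB indT])
  then have "card (cu ` P) \<le> card B" by (rule conjunct2)
  obtain S where S: "inj_on cc S" "B = cc ` S" using B(1)[unfolded subset_image_inj] by blast
  have indS: "ind_idx cc S" by (rule ind_idxI) (use S B in auto)
  have cS: "cindep_cols C S" using indS by (simp add: cindep_cols_iff cc_eq)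
  have "card S = card B" using S by (simp add: card_image)
  then have "card S = card P" using upper[OF cS] \<open>card (cu ` P) \<le> card B\<close> cardT by linarith
  then have "crank C = card P" using crank_eqI[of C "card P" S] upper cS by blast
  then show ?thesis by (simp add: C_def)
qed




definition Qf :: "('n::finite \<Rightarrow> 'n \<Rightarrow> complex) \<Rightarrow> ('n \<Rightarrow> complex) \<Rightarrow> complex" where
  "Qf C y = (\<Sum>i\<in>UNIV. \<Sum>j\<in>UNIV. cnj (y i) * C i j * y j)"

lemma sum_two:
  fixes f :: "'n::finite \<Rightarrow> 'a::comm_monoid_add"
  assumes "a \<noteq> b" "\<And>i. i \<noteq> a \<Longrightarrow> i \<noteq> b \<Longrightarrow> f i = 0"
  shows "sum f UNIV = f a + f b"
proof -
  have "sum f UNIV = sum f {a,b}"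
    by (rule sum.mono_neutral_right) (use assms in auto)
  then show ?thesis using assms(1) by simp
qed

lemma sum_one:
  fixes f :: "'n::finite \<Rightarrow> 'a::comm_monoid_add"
  assumes "\<And>i. i \<noteq> a \<Longrightarrow> f i = 0"
  shows "sum f UNIV = f a"
proof -
  have "sum f UNIV = sum f {a}"
    by (rule sum.mono_neutral_right) (use assms in auto)
  then show ?thesis by simp
qed

lemma Qf_two:
  assumes "a \<noteq> b"
  shows "Qf C (\<lambda>i. if i = a then p else if i = b then q else 0) =
     cnj p * C a a * p + cnj p * C a b * q + (cnj q * C b a * p + cnj q * C b b * q)"
proof -
  let ?y = "\<lambda>i. if i = a then p else if i = b then q else 0"
  have inner: "(\<Sum>j\<in>UNIV. cnj (?y i) * C i j * ?y j) = cnj (?y i) * C i a * p + cnj (?y i) * C i b * q" for i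
  proof (subst sum_two[OF assms])
    show "cnj (?y i) * C i j * ?y j = 0" if "j \<noteq> a" "j \<noteq> b" for j using that by simp
  qed (use assms in simp)
  show ?thesis unfolding Qf_def inner
  proof (subst sum_two[OF assms])
    show "cnj (?y i) * C i a * p + cnj (?y i) * C i b * q = 0" if "i \<noteq> a" "i \<noteq> b" for i using that by simp
  qed (use assms in simp)
qed

lemma Qf_one: "Qf C (\<lambda>i. if i = a then p else 0) = cnj p * C a a * p"
proof -
  let ?y = "\<lambda>i. if i = a then p else (0::complex)"
  have inner: "(\<Sum>j\<in>UNIV. cnj (?y i) * C i j * ?y j) = cnj (?y i) * C i a * p" for i
  proof (subst sum_one)
    show "cnj (?y i) * C i j * ?y j = 0" if "j \<noteq> a" for j using that by simp
  qed simp
  show ?thesis unfolding Qf_def inner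
  proof (subst sum_one)
    show "cnj (?y i) * C i a * p = 0" if "i \<noteq> a" for i using that by simp
  qed simp
qed

lemma herm_real: "C a a = cnj (C a a) \<Longrightarrow> C a a = complex_of_real (Re (C a a))"
  by (simp add: complex_eq_iff)

lemma zero_pivot_row:
  assumes herm: "\<And>i j. C j i = cnj (C i j)" and psd: "\<And>y. 0 \<le> Re (Qf C y)"
    and d0: "C a a = 0"
  shows "C a b = 0"
proof (rule ccontr)
  assume nz: "C a b \<noteq> 0"
  then have ab: "a \<noteq> b" using d0 by auto
  define m where "m = (cmod (C a b))^2"
  have m: "m > 0" using nz by (simp add: m_def)
  define t where "t = (Re (C b b) + 1) / (2 * m)"
  define p where "p = - complex_of_real t * C a b"
  have e1: "cnj p * C a b = - complex_of_real (t * m)"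
    unfolding p_def m_def by (simp add: cnj_mult_self)
  have e2: "C b a * p = - complex_of_real (t * m)"
  proof -
    have "C b a * p = cnj (cnj p * C a b)" using herm[of a b] by (simp add: mult.commute)
    then show ?thesis using e1 by simp
  qed
  have "Qf C (\<lambda>i. if i = a then p else if i = b then 1 else 0) =
      cnj p * C a b + C b a * p + C b b"
    using Qf_two[OF ab, of C p 1] d0 by simp
  also have "\<dots> = - complex_of_real (2 * t * m) + C b b" by (simp add: e1 e2)
  finally have "Re (Qf C (\<lambda>i. if i = a then p else if i = b then 1 else 0)) = - 2 * t * m + Re (C b b)"
    by simp
  also have "\<dots> = -1" using m by (simp add: t_def field_simps)
  finally show False using psd[of "\<lambda>i. if i = a then p else if i = b then 1 else 0"] by simp
qed

definition Bf :: "('n::finite \<Rightarrow> 'n \<Rightarrow> complex) \<Rightarrow> ('n \<Rightarrow> complex) \<Rightarrow> ('n \<Rightarrow> complex) \<Rightarrow> complex" where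
  "Bf C x y = (\<Sum>i\<in>UNIV. \<Sum>j\<in>UNIV. cnj (x i) * C i j * y j)"

lemma Qf_Bf: "Qf C y = Bf C y y" by (simp add: Qf_def Bf_def)

lemma Bf_add: "Bf C (\<lambda>i. x i + e i) (\<lambda>i. x i + e i) = Bf C x x + Bf C x e + Bf C e x + Bf C e e"
  by (simp add: Bf_def ring_distribs sum.distrib)

lemma Bf_delta_right: "Bf C x (\<lambda>i. if i = a then p else 0) = (\<Sum>i\<in>UNIV. cnj (x i) * C i a) * p"
proof -
  have "(\<Sum>j\<in>UNIV. cnj (x i) * C i j * (if j = a then p else 0)) = cnj (x i) * C i a * p" for i
    by (subst sum_one[where a=a]) simp_all
  then show ?thesis by (simp add: Bf_def sum_distrib_right)
qed

lemma Bf_delta_left: "Bf C (\<lambda>i. if i = a then p else 0) y = cnj p * (\<Sum>j\<in>UNIV. C a j * y j)"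
proof -
  have "(\<Sum>i\<in>UNIV. \<Sum>j\<in>UNIV. cnj (if i = a then p else 0) * C i j * y j) = (\<Sum>j\<in>UNIV. cnj p * C a j * y j)"
    by (subst sum_one[where a=a]) simp_all
  then show ?thesis by (simp add: Bf_def sum_distrib_left mult.assoc)
qed

lemma schur_psd:
  assumes herm: "\<And>i j. C j i = cnj (C i j)" and psd: "\<And>y. 0 \<le> Re (Qf C y)"
    and d: "C a a = complex_of_real dr" "dr \<noteq> 0"
  shows "0 \<le> Re (Qf (\<lambda>i j. C i j - C i a * C a j / C a a) y)"
proof -
  define \<beta> where "\<beta> = (\<Sum>j\<in>UNIV. C a j * y j)"
  have cb: "(\<Sum>i\<in>UNIV. cnj (y i) * C i a) = cnj \<beta>"
    unfolding \<beta>_def by (simp add: herm[of _ a] mult.commute)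
  define \<alpha> where "\<alpha> = - \<beta> / C a a"
  define e where "e i = (if i = a then \<alpha> else 0)" for i
  have ca: "cnj \<alpha> = - cnj \<beta> / C a a" using d by (simp add: \<alpha>_def)
  have "Qf (\<lambda>i j. C i j - C i a * C a j / C a a) y =
        Qf C y - (\<Sum>i\<in>UNIV. \<Sum>j\<in>UNIV. (cnj (y i) * C i a) * (C a j * y j)) / C a a"
    by (simp add: Qf_def ring_distribs sum_subtractf sum_divide_distrib mult_ac)
  also have "\<dots> = Qf C y - cnj \<beta> * \<beta> / C a a"
    by (simp add: sum_product[symmetric] cb \<beta>_def)
  finally have e1: "Qf (\<lambda>i j. C i j - C i a * C a j / C a a) y = Qf C y - cnj \<beta> * \<beta> / C a a" .
  have "Qf C (\<lambda>i. y i + e i) = Qf C y + cnj \<beta> * \<alpha> + cnj \<alpha> * \<beta> + cnj \<alpha> * (C a a * \<alpha>)"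
    unfolding Qf_Bf Bf_add unfolding e_def Bf_delta_right Bf_delta_left cb \<beta>_def[symmetric]
    by (simp add: sum_one[where a=a])
  also have "\<dots> = Qf C y - cnj \<beta> * \<beta> / C a a"
    unfolding ca using d by (simp add: \<alpha>_def field_simps)
  finally show ?thesis using e1 psd[of "\<lambda>i. y i + e i"] by simp
qed

lemma chol:
  fixes C :: "'n::finite \<Rightarrow> 'n \<Rightarrow> complex"
  assumes "finite I"
  shows "(\<And>i j. C j i = cnj (C i j)) \<Longrightarrow> (\<And>y. 0 \<le> Re (Qf C y)) \<Longrightarrow>
    (\<And>i j. i \<notin> I \<Longrightarrow> C i j = 0) \<Longrightarrow>
    \<exists>P u. P \<subseteq> I \<and> (\<forall>i j. C i j = (\<Sum>k\<in>P. u k i * cnj (u k j))) \<and>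
      (\<forall>k\<in>P. \<forall>i. i \<notin> I \<longrightarrow> u k i = 0) \<and>
      (\<forall>c. (\<forall>i. (\<Sum>k\<in>P. c k * u k i) = 0) \<longrightarrow> (\<forall>k\<in>P. c k = 0))"
  using assms
proof (induction I arbitrary: C rule: finite_induct)
  case empty
  then have "C i j = 0" for i j by auto
  then show ?case by (intro exI[of _ "{}"] exI[of _ "\<lambda>k i. 0"]) auto
next
  case (insert a I)
  note herm = insert.prems(1) and psd = insert.prems(2) and supp = insert.prems(3)
  show ?case
  proof (cases "C a a = 0")
    case True
    have row: "C a j = 0" for j by (rule zero_pivot_row[OF herm psd True])
    have supp': "C i j = 0" if "i \<notin> I" for i j
      using supp[of i j] row[of j] that by (cases "i = a") auto
    obtain P u where Pu: "P \<subseteq> I" "\<forall>i j. C i j = (\<Sum>k\<in>P. u k i * cnj (u k j))"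
        "\<forall>k\<in>P. \<forall>i. i \<notin> I \<longrightarrow> u k i = 0"
        "\<forall>c. (\<forall>i. (\<Sum>k\<in>P. c k * u k i) = 0) \<longrightarrow> (\<forall>k\<in>P. c k = 0)"
      using insert.IH[OF herm psd supp'] by blast
    show ?thesis
      by (rule exI[of _ P], rule exI[of _ u]) (use Pu in auto)
  next
    case False
    define dr where "dr = Re (C a a)"
    have daa: "C a a = complex_of_real dr"
      unfolding dr_def by (rule herm_real) (rule herm)
    have "0 \<le> Re (Qf C (\<lambda>i. if i = a then 1 else 0))" by (rule psd)
    then have "0 \<le> dr" by (simp add: Qf_one dr_def)
    moreover have "dr \<noteq> 0" using False daa by auto
    ultimately have dpos: "dr > 0" by simp
    define C' where "C' i j = C i j - C i a * C a j / C a a" for i j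
    have herm': "C' j i = cnj (C' i j)" for i j
      unfolding C'_def using daa by (simp add: herm[of i j] herm[of a j] herm[of i a] mult.commute)
    have psd': "0 \<le> Re (Qf C' y)" for y
      unfolding C'_def[abs_def] by (rule schur_psd[OF herm psd daa \<open>dr \<noteq> 0\<close>])
    have supp': "C' i j = 0" if "i \<notin> I" for i j
    proof (cases "i = a")
      case True then show ?thesis using False by (simp add: C'_def)
    next
      case F: False
      then have "i \<notin> insert a I" using that by auto
      then show ?thesis using supp[of i j] supp[of i a] by (simp add: C'_def)
    qed
    obtain P u where Pu: "P \<subseteq> I" "\<forall>i j. C' i j = (\<Sum>k\<in>P. u k i * cnj (u k j))"
        "\<forall>k\<in>P. \<forall>i. i \<notin> I \<longrightarrow> u k i = 0"
        "\<forall>c. (\<forall>i. (\<Sum>k\<in>P. c k * u k i) = 0) \<longrightarrow> (\<forall>k\<in>P. c k = 0)"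
      using insert.IH[OF herm' psd' supp'] by blast
    define w where "w i = C i a / complex_of_real (sqrt dr)" for i
    define u' where "u' = u(a := w)"
    have aP: "a \<notin> P" using Pu(1) insert.hyps(2) by auto
    have finP: "finite P" using Pu(1) insert.hyps(1) finite_subset by auto
    have ww: "w i * cnj (w j) = C i a * C a j / C a a" for i j
    proof -
      have "cnj (C j a) = C a j" using herm[of a j] by simp
      moreover have "complex_of_real (sqrt dr) * complex_of_real (sqrt dr) = complex_of_real dr"
        using dpos by (simp flip: of_real_mult)
      ultimately show ?thesis unfolding w_def daa by (simp add: field_simps)
    qed
    have u'a: "u' a = w" by (simp add: u'_def)
    have sumP: "(\<Sum>k\<in>P. u' k i * cnj (u' k j)) = (\<Sum>k\<in>P. u k i * cnj (u k j))" for i j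
      by (rule sum.cong) (use aP in \<open>auto simp: u'_def\<close>)
    have sumP2: "(\<Sum>k\<in>P. c k * u' k i) = (\<Sum>k\<in>P. c k * u k i)" for c i
      by (rule sum.cong) (use aP in \<open>auto simp: u'_def\<close>)
    show ?thesis
    proof (intro exI[of _ "insert a P"] exI[of _ u'] conjI allI ballI impI)
      show "insert a P \<subseteq> insert a I" using Pu(1) by auto
    next
      fix i j
      have "C i j = C' i j + C i a * C a j / C a a" by (simp add: C'_def)
      also have "\<dots> = (\<Sum>k\<in>P. u k i * cnj (u k j)) + w i * cnj (w j)" using Pu(2) ww by simp
      also have "\<dots> = (\<Sum>k\<in>insert a P. u' k i * cnj (u' k j))"
        using finP aP by (simp add: sumP u'a)
      finally show "C i j = (\<Sum>k\<in>insert a P. u' k i * cnj (u' k j))" .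
    next
      fix k i assume k: "k \<in> insert a P" and i: "i \<notin> insert a I"
      show "u' k i = 0"
      proof (cases "k = a")
        case True then show ?thesis using supp[OF i, of a] by (simp add: u'_def w_def)
      next
        case F: False then show ?thesis using k i Pu(3) by (auto simp: u'_def)
      qed
    next
      fix c k assume c: "\<forall>i. (\<Sum>k\<in>insert a P. c k * u' k i) = 0" and k: "k \<in> insert a P"
      have ua: "u k a = 0" if "k \<in> P" for k using Pu(3) that insert.hyps(2) by auto
      have "(\<Sum>k\<in>insert a P. c k * u' k a) = c a * w a"
        using finP aP by (simp add: sumP2 ua u'a)
      moreover have "w a \<noteq> 0" using False dpos by (simp add: w_def)
      ultimately have ca: "c a = 0" using c by simp
      have "\<forall>i. (\<Sum>k\<in>P. c k * u k i) = 0"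
      proof
        fix i show "(\<Sum>k\<in>P. c k * u k i) = 0"
          using c[rule_format, of i] finP aP ca by (simp add: sumP2)
      qed
      then have "\<forall>k\<in>P. c k = 0" using Pu(4) by blast
      then show "c k = 0" using k ca by auto
    qed
  qed
qed




definition ssq :: "'s::finite itself \<Rightarrow> complex" where
  "ssq _ = complex_of_real (sqrt (real CARD('s)))"

lemma ssq_nz[simp]: "ssq TYPE('s::finite) \<noteq> 0"
  by (simp add: ssq_def)

lemma ssq_sq: "ssq TYPE('s::finite) * cnj (ssq TYPE('s)) = of_nat CARD('s)"
  by (simp add: ssq_def flip: of_real_mult)

definition Mv :: "complex^'s::finite^('r::finite \<times> 't::finite) \<Rightarrow> complex^'r^('s \<times> 't)" where
  "Mv V = (\<chi> p i. cnj (V$(i, snd p)$(fst p)) / ssq TYPE('s))"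

definition Vof :: "complex^'r::finite^('s::finite \<times> 't::finite) \<Rightarrow> complex^'s^('r \<times> 't)" where
  "Vof M = (\<chi> q a. cnj (M$(a, snd q)$(fst q) * ssq TYPE('s)))"

lemma Mv_Vof: "Mv (Vof M) = M"
  by (simp add: Mv_def Vof_def vec_eq_iff)

lemma Vof_Mv: "Vof (Mv V) = V"
  by (simp add: Mv_def Vof_def vec_eq_iff)

lemma Mv_inj: "Mv V = Mv W \<Longrightarrow> V = W"
  by (metis Vof_Mv)

definition phi :: "complex^'s::finite^('r::finite \<times> 't::finite) \<Rightarrow> complex^('s \<times> 't)^('s \<times> 't)" where
  "phi V = Mv V ** adjoint_mat (Mv V)"

lemma Mv_kron: "Mv (kron_id_act U V) = Mv V ** adjoint_mat U"
  by (simp add: Mv_def kron_id_act_def vec_eq_iff matrix_matrix_mult_def adjoint_mat_def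
      sum_divide_distrib mult.commute)

lemma ptrace_phi:
  "partial_trace_B (phi (V :: complex^'s::finite^('r::finite \<times> 't::finite))) =
     (\<chi> a a'. (adjoint_mat V ** V)$a$a' / of_nat CARD('s))"
proof -
  have "(\<Sum>b\<in>UNIV. \<Sum>i\<in>UNIV. cnj (V$(i,b)$a) / ssq TYPE('s) * cnj (cnj (V$(i,b)$a') / ssq TYPE('s))) =
        (\<Sum>q\<in>UNIV. cnj (V$q$a) * V$q$a') / of_nat CARD('s)" for a a'
  proof -
    have "(\<Sum>b\<in>UNIV. \<Sum>i\<in>UNIV. cnj (V$(i,b)$a) / ssq TYPE('s) * cnj (cnj (V$(i,b)$a') / ssq TYPE('s))) =
          (\<Sum>b\<in>UNIV. \<Sum>i\<in>UNIV. cnj (V$(i,b)$a) * V$(i,b)$a' / (ssq TYPE('s) * cnj (ssq TYPE('s))))"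
      by (simp add: field_simps)
    also have "\<dots> = (\<Sum>i\<in>UNIV. \<Sum>b\<in>UNIV. cnj (V$(i,b)$a) * V$(i,b)$a') / of_nat CARD('s)"
      by (subst sum.swap) (simp add: ssq_sq sum_divide_distrib)
    also have "\<dots> = (\<Sum>q\<in>UNIV. cnj (V$q$a) * V$q$a') / of_nat CARD('s)"
      by (simp add: sum.cartesian_product UNIV_Times_UNIV[symmetric] del: UNIV_Times_UNIV)
    finally show ?thesis .
  qed
  then show ?thesis
    by (simp add: partial_trace_B_def phi_def Mv_def matrix_matrix_mult_def adjoint_mat_def vec_eq_iff)
qed

lemma isometry_iff_ptrace:
  "partial_trace_B (phi (V :: complex^'s::finite^('r::finite \<times> 't::finite))) =
     (\<chi> a a'. if a = a' then 1 / of_nat CARD('s) else 0) \<longleftrightarrow> adjoint_mat V ** V = mat 1"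
  by (auto simp: ptrace_phi vec_eq_iff mat_def field_simps)

lemma indep_iff:
  "clin_indep_mats (block (V :: complex^'s::finite^('r::finite \<times> 't::finite))) \<longleftrightarrow>
     (\<forall>c. Mv V *v c = 0 \<longrightarrow> c = 0)"
proof -
  have key: "(Mv V *v c = 0) \<longleftrightarrow> (\<forall>j k. (\<Sum>i\<in>UNIV. cnj (c$i) * V$(i,j)$k) = 0)" for c
  proof -
    have e: "(Mv V *v c)$(k,j) = cnj (\<Sum>i\<in>UNIV. cnj (c$i) * V$(i,j)$k) / ssq TYPE('s)" for j k
      by (simp add: Mv_def matrix_vector_mult_def sum_divide_distrib mult.commute)
    have e2: "(Mv V *v c)$(k,j) = 0 \<longleftrightarrow> (\<Sum>i\<in>UNIV. cnj (c$i) * V$(i,j)$k) = 0" for j k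
      unfolding e by (simp only: divide_eq_0_iff complex_cnj_zero_iff ssq_nz simp_thms)
    have "(Mv V *v c = 0) \<longleftrightarrow> (\<forall>p. (Mv V *v c)$p = 0)" by (simp add: vec_eq_iff)
    also have "\<dots> \<longleftrightarrow> (\<forall>k j. (Mv V *v c)$(k,j) = 0)" by auto
    finally show ?thesis using e2 by auto
  qed
  show ?thesis
  proof
    assume h: "clin_indep_mats (block V)"
    show "\<forall>c. Mv V *v c = 0 \<longrightarrow> c = 0"
    proof (intro allI impI)
      fix c assume "Mv V *v c = 0"
      then have "\<forall>j k. (\<Sum>i\<in>UNIV. cnj (c$i) * block V i $ j $ k) = 0" by (simp add: key block_def)
      then have "\<forall>i. cnj (c$i) = 0" using h unfolding clin_indep_mats_def
        by (auto dest: spec[of _ "\<lambda>i. cnj (c$i)"])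
      then show "c = 0" by (simp add: vec_eq_iff)
    qed
  next
    assume h: "\<forall>c. Mv V *v c = 0 \<longrightarrow> c = 0"
    show "clin_indep_mats (block V)" unfolding clin_indep_mats_def
    proof (intro allI impI)
      fix d :: "'r \<Rightarrow> complex" and i
      assume d: "\<forall>j k. (\<Sum>i\<in>UNIV. d i * block V i $ j $ k) = 0"
      have "Mv V *v (\<chi> i. cnj (d i)) = 0" using d by (simp add: key block_def)
      then have "(\<chi> i. cnj (d i)) = 0" using h by blast
      then show "d i = 0" by (simp add: vec_eq_iff)
    qed
  qed
qed

lemma psd_gram: "psd_mat (M ** adjoint_mat (M :: complex^'k::finite^'n::finite))"
  unfolding psd_mat_def hermitian_mat_def
proof (intro conjI allI)
  show "adjoint_mat (M ** adjoint_mat M) = M ** adjoint_mat M" by (simp add: adj_mult)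
next
  fix x :: "'n \<Rightarrow> complex"
  define xv where "xv = vec_lambda x"
  have "(\<Sum>i\<in>UNIV. \<Sum>j\<in>UNIV. cnj (x i) * (M ** adjoint_mat M) $ i $ j * x j) =
        cinner xv ((M ** adjoint_mat M) *v xv)"
    by (simp add: cinner_def xv_def matrix_vector_mult_def sum_distrib_left mult.assoc)
  also have "\<dots> = cinner xv (adjoint_mat (adjoint_mat M) *v (adjoint_mat M *v xv))"
    by (simp add: matrix_vector_mul_assoc)
  also have "\<dots> = cinner (adjoint_mat M *v xv) (adjoint_mat M *v xv)"
    by (rule cinner_adj)
  finally show "0 \<le> Re (\<Sum>i\<in>UNIV. \<Sum>j\<in>UNIV. cnj (x i) * (M ** adjoint_mat M) $ i $ j * x j)"
    using Re_cinner_self by simp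
qed




lemma V_set_iff: "V \<in> V_set \<longleftrightarrow> adjoint_mat V ** V = mat 1 \<and> (\<forall>c. Mv V *v c = 0 \<longrightarrow> c = 0)"
  by (simp add: V_set_def cmat_mult_eq cid_eq indep_iff)

lemma phi_in_C:
  assumes "(V :: complex^'s::finite^('r::finite \<times> 't::finite)) \<in> V_set"
  shows "phi V \<in> C_set TYPE('r)"
proof -
  have iso: "adjoint_mat V ** V = mat 1" and inj: "\<forall>c. Mv V *v c = 0 \<longrightarrow> c = 0"
    using assms by (auto simp: V_set_iff)
  have "crank (phi V) = card (UNIV :: 'r set)"
    unfolding phi_def by (rule rank_gram) (use inj in auto)
  then show ?thesis
    unfolding C_set_def using psd_gram[of "Mv V"] iso isometry_iff_ptrace[of V]
    by (simp add: phi_def)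
qed

lemma C_surj:
  assumes "C \<in> C_set TYPE('r::finite)"
  shows "\<exists>V :: complex^'s::finite^('r \<times> 't::finite). V \<in> V_set \<and> phi V = C"
proof -
  have psd: "psd_mat C" and rk: "crank C = CARD('r)"
    and pt: "partial_trace_B C = (\<chi> a a'. if a = a' then 1 / of_nat CARD('s) else 0)"
    using assms by (auto simp: C_set_def)
  define Cf where "Cf i j = C$i$j" for i j
  have herm: "Cf j i = cnj (Cf i j)" for i j
  proof -
    have "adjoint_mat C = C" using psd by (simp add: psd_mat_def hermitian_mat_def)
    then have "adjoint_mat C $ j $ i = C $ j $ i" by simp
    then show ?thesis by (simp add: adjoint_mat_def Cf_def)
  qed
  have qpsd: "0 \<le> Re (Qf Cf y)" for y
    using psd by (simp add: psd_mat_def Qf_def Cf_def)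
  obtain P :: "('s \<times> 't) set" and u where Pu: "\<forall>i j. Cf i j = (\<Sum>k\<in>P. u k i * cnj (u k j))"
      "\<forall>c. (\<forall>i. (\<Sum>k\<in>P. c k * u k i) = 0) \<longrightarrow> (\<forall>k\<in>P. c k = 0)"
  proof -
    have "\<exists>(P :: ('s \<times> 't) set) u. P \<subseteq> UNIV \<and> (\<forall>i j. Cf i j = (\<Sum>k\<in>P. u k i * cnj (u k j))) \<and>
      (\<forall>k\<in>P. \<forall>i. i \<notin> UNIV \<longrightarrow> u k i = 0) \<and>
      (\<forall>c. (\<forall>i. (\<Sum>k\<in>P. c k * u k i) = 0) \<longrightarrow> (\<forall>k\<in>P. c k = 0))"
      by (rule chol[where I=UNIV and C=Cf]) (auto intro: herm qpsd)
    then show ?thesis using that by blast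
  qed
  define U :: "complex^('s \<times> 't)^('s \<times> 't)" where "U = (\<chi> i k. if k \<in> P then u k i else 0)"
  have UU: "U ** adjoint_mat U = C"
  proof -
    have "(U ** adjoint_mat U)$i$j = (\<Sum>k\<in>P. u k i * cnj (u k j))" for i j
      by (simp add: U_def matrix_matrix_mult_def adjoint_mat_def if_distrib if_distribR sum.If_cases
           cong: if_cong)
    then show ?thesis using Pu(1) by (simp add: vec_eq_iff Cf_def)
  qed
  have "crank (U ** adjoint_mat U) = card P"
  proof (rule rank_gram)
    show "U$p$k = 0" if "k \<notin> P" for p k using that by (simp add: U_def)
  next
    fix x :: "complex^('s \<times> 't)"
    assume x0: "\<forall>k. k \<notin> P \<longrightarrow> x$k = 0" and Ux: "U *v x = 0"
    have "(\<Sum>k\<in>P. x$k * u k i) = 0" for i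
    proof -
      have "(U *v x)$i = (\<Sum>k\<in>P. x$k * u k i)"
        by (simp add: U_def matrix_vector_mult_def if_distrib if_distribR sum.If_cases mult.commute
             cong: if_cong)
      then show ?thesis using Ux by simp
    qed
    then have "\<forall>k\<in>P. x$k = 0" using Pu(2) by (auto dest: spec[of _ "\<lambda>k. x$k"])
    then show "x = 0" using x0 by (auto simp: vec_eq_iff)
  qed
  then have cardP: "card P = CARD('r)" using UU rk by simp
  obtain h where h: "bij_betw h (UNIV :: 'r set) P"
    using finite_same_card_bij[of "UNIV :: 'r set" P] cardP by auto
  define M :: "complex^'r^('s \<times> 't)" where "M = (\<chi> p i. u (h i) p)"
  have MM: "M ** adjoint_mat M = C"
  proof -
    have "(M ** adjoint_mat M)$p$q = (\<Sum>i\<in>UNIV. u (h i) p * cnj (u (h i) q))" for p q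
      by (simp add: M_def matrix_matrix_mult_def adjoint_mat_def)
    also have "\<dots> p q = (\<Sum>k\<in>P. u k p * cnj (u k q))" for p q
      by (rule sum.reindex_bij_betw[OF h])
    finally show ?thesis using Pu(1) by (simp add: vec_eq_iff Cf_def)
  qed
  have Minj: "\<forall>c. M *v c = 0 \<longrightarrow> c = 0"
  proof (intro allI impI)
    fix c assume Mc: "M *v c = 0"
    define c' where "c' k = c$(inv_into UNIV h k)" for k
    have hinv: "inv_into UNIV h (h i) = i" for i
      using h by (simp add: bij_betw_def inv_into_f_f)
    have "(\<Sum>k\<in>P. c' k * u k p) = 0" for p
    proof -
      have "(\<Sum>k\<in>P. c' k * u k p) = (\<Sum>i\<in>UNIV. c' (h i) * u (h i) p)"
        by (rule sum.reindex_bij_betw[OF h, symmetric])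
      also have "\<dots> = (M *v c)$p" by (simp add: M_def matrix_vector_mult_def c'_def hinv mult.commute)
      finally show ?thesis using Mc by simp
    qed
    then have "\<forall>k\<in>P. c' k = 0" using Pu(2) by blast
    then have "c$i = 0" for i using h hinv[of i] by (auto simp: c'_def bij_betw_def)
    then show "c = 0" by (simp add: vec_eq_iff)
  qed
  define V :: "complex^'s^('r \<times> 't)" where "V = Vof M"
  have MV: "Mv V = M" by (simp add: V_def Mv_Vof)
  have phiV: "phi V = C" by (simp add: phi_def MV MM)
  have "adjoint_mat V ** V = mat 1" using isometry_iff_ptrace[of V] pt phiV by simp
  then have "V \<in> V_set" using Minj MV by (simp add: V_set_iff)
  then show ?thesis using phiV by blast
qed




lemma orbit_eq:
  "(orbit_rel :: ((complex^'s::finite^('r::finite \<times> 't::finite)) \<times> _) set) =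
     {(V, W). V \<in> V_set \<and> W \<in> V_set \<and> phi V = phi W}"
proof (intro set_eqI iffI; clarify)
  fix V W :: "complex^'s^('r \<times> 't)"
  assume "(V, W) \<in> orbit_rel"
  then obtain U :: "complex^'r^'r" where V: "V \<in> V_set" and W: "W \<in> V_set" and U: "unitary_mat U"
    and WU: "W = kron_id_act U V" by (auto simp: orbit_rel_def)
  have UU: "adjoint_mat U ** U = mat 1" using U by (simp add: unitary_mat_def cmat_mult_eq cid_eq)
  have "phi W = Mv V ** adjoint_mat U ** (U ** adjoint_mat (Mv V))"
    by (simp add: phi_def WU Mv_kron adj_mult)
  also have "\<dots> = Mv V ** (adjoint_mat U ** U) ** adjoint_mat (Mv V)"
    by (simp add: matrix_mul_assoc)
  also have "\<dots> = phi V" by (simp add: UU phi_def)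
  finally show "V \<in> V_set \<and> W \<in> V_set \<and> phi V = phi W" using V W by simp
next
  fix V W :: "complex^'s^('r \<times> 't)"
  assume V: "V \<in> V_set" and W: "W \<in> V_set" and eq: "phi V = phi W"
  define M where "M = Mv V"
  define N where "N = Mv W"
  have Minj: "\<forall>x. M *v x = 0 \<longrightarrow> x = 0" using V by (simp add: V_set_iff M_def)
  have Ninj: "\<forall>x. N *v x = 0 \<longrightarrow> x = 0" using W by (simp add: V_set_iff N_def)
  have MN: "M ** adjoint_mat M = N ** adjoint_mat N" using eq by (simp add: phi_def M_def N_def)
  obtain Hi where Hi: "Hi ** (adjoint_mat M ** M) = mat 1" "(adjoint_mat M ** M) ** Hi = mat 1"
    using gram_left_inv[OF Minj] by blast
  obtain Gi where Gi: "Gi ** (adjoint_mat N ** N) = mat 1" "(adjoint_mat N ** N) ** Gi = mat 1"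
    using gram_left_inv[OF Ninj] by blast
  define Y where "Y = adjoint_mat M ** N ** Gi"
  have MY: "M ** Y = N"
  proof -
    have "M ** Y = (M ** adjoint_mat M) ** N ** Gi" by (simp add: Y_def matrix_mul_assoc)
    also have "\<dots> = N ** ((adjoint_mat N ** N) ** Gi)" by (simp add: MN matrix_mul_assoc)
    also have "\<dots> = N" by (simp add: Gi)
    finally show ?thesis .
  qed
  have YY: "Y ** adjoint_mat Y = mat 1"
  proof -
    have "mat 1 = (Hi ** (adjoint_mat M ** M)) ** ((adjoint_mat M ** M) ** Hi)" by (simp add: Hi)
    also have "\<dots> = Hi ** adjoint_mat M ** (M ** adjoint_mat M) ** M ** Hi"
      by (simp add: matrix_mul_assoc)
    also have "\<dots> = Hi ** adjoint_mat M ** (M ** Y ** adjoint_mat (M ** Y)) ** M ** Hi"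
      by (simp add: MY MN)
    also have "\<dots> = (Hi ** (adjoint_mat M ** M)) ** (Y ** adjoint_mat Y) ** ((adjoint_mat M ** M) ** Hi)"
      by (simp add: adj_mult matrix_mul_assoc)
    also have "\<dots> = Y ** adjoint_mat Y" by (simp add: Hi)
    finally show ?thesis by simp
  qed
  define U where "U = adjoint_mat Y"
  have "unitary_mat U" using YY by (simp add: unitary_mat_def U_def cmat_mult_eq cid_eq)
  moreover have "W = kron_id_act U V"
  proof (rule Mv_inj)
    show "Mv W = Mv (kron_id_act U V)" by (simp add: Mv_kron U_def MY flip: M_def N_def)
  qed
  ultimately show "(V, W) \<in> orbit_rel" using V W by (auto simp: orbit_rel_def)
qed

lemma V_char:
  fixes V :: "complex^'s::finite^('r::finite \<times> 't::finite)"
  assumes iso: "adjoint_mat V ** V = mat 1" and C: "phi V \<in> C_set TYPE('r)"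
  shows "V \<in> V_set"
proof -
  obtain V' :: "complex^'s^('r \<times> 't)" where V': "V' \<in> V_set" "phi V' = phi V"
    using C_surj[OF C] by blast
  define M where "M = Mv V"
  define M' where "M' = Mv V'"
  have M'inj: "\<forall>x. M' *v x = 0 \<longrightarrow> x = 0" using V' by (simp add: V_set_iff M'_def)
  have MM: "M' ** adjoint_mat M' = M ** adjoint_mat M" using V' by (simp add: phi_def M_def M'_def)
  obtain Gi where Gi: "Gi ** (adjoint_mat M' ** M') = mat 1" "(adjoint_mat M' ** M') ** Gi = mat 1"
    using gram_left_inv[OF M'inj] by blast
  define K where "K = adjoint_mat M' ** M"
  have "K ** (adjoint_mat M ** M' ** Gi ** Gi) = mat 1"
  proof -
    have "K ** (adjoint_mat M ** M' ** Gi ** Gi) = adjoint_mat M' ** (M ** adjoint_mat M) ** M' ** Gi ** Gi"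
      by (simp add: K_def matrix_mul_assoc)
    also have "\<dots> = (adjoint_mat M' ** M') ** ((adjoint_mat M' ** M') ** Gi) ** Gi"
      by (simp add: MM[symmetric] matrix_mul_assoc)
    also have "\<dots> = mat 1" by (simp add: Gi)
    finally show ?thesis .
  qed
  then obtain L where L: "L ** K = mat 1" using matrix_left_right_inverse by blast
  have "\<forall>c. M *v c = 0 \<longrightarrow> c = 0"
  proof (intro allI impI)
    fix c assume "M *v c = 0"
    then have "K *v c = 0" by (simp add: K_def matrix_vector_mul_assoc[symmetric])
    then have "(L ** K) *v c = 0" by (simp add: matrix_vector_mul_assoc[symmetric])
    then show "c = 0" by (simp add: L)
  qed
  then show ?thesis using iso by (simp add: V_set_iff M_def)
qed




lemma quotient_istopology:
  assumes eq: "equiv (topspace X) R"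
  shows "istopology (\<lambda>U. U \<subseteq> topspace X // R \<and> openin X (\<Union>U))"
  unfolding istopology_def
proof (intro conjI allI impI ballI)
  fix S T assume S: "S \<subseteq> topspace X // R \<and> openin X (\<Union>S)" and T: "T \<subseteq> topspace X // R \<and> openin X (\<Union>T)"
  have disj: "E1 = E2 \<or> E1 \<inter> E2 = {}" if "E1 \<in> S" "E2 \<in> T" for E1 E2
    using quotient_disj[OF eq] S T that by blast
  have "\<Union>S \<inter> \<Union>T \<subseteq> \<Union>(S \<inter> T)"
  proof
    fix x assume "x \<in> \<Union>S \<inter> \<Union>T"
    then obtain E1 E2 where E: "E1 \<in> S" "E2 \<in> T" "x \<in> E1" "x \<in> E2" by blast
    then have "E1 = E2" using disj[OF E(1,2)] by blast
    then show "x \<in> \<Union>(S \<inter> T)" using E by blast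
  qed
  then have "\<Union>(S \<inter> T) = \<Union>S \<inter> \<Union>T" by blast
  then show "openin X (\<Union>(S \<inter> T))" using S T by auto
  show "S \<inter> T \<subseteq> topspace X // R" using S by auto
next
  fix K assume K: "\<forall>U\<in>K. U \<subseteq> topspace X // R \<and> openin X (\<Union>U)"
  have "\<Union>(\<Union>K) = \<Union>(Union ` K)" by blast
  moreover have "openin X (\<Union>(Union ` K))" using K by (intro openin_Union) auto
  ultimately show "openin X (\<Union>(\<Union>K))" by simp
  show "\<Union>K \<subseteq> topspace X // R" using K by auto
qed

lemma quotient_openin:
  assumes eq: "equiv (topspace X) R"
  shows "openin (quotient_topology X R) U \<longleftrightarrow> U \<subseteq> topspace X // R \<and> openin X (\<Union>U)"
  unfolding quotient_topology_def using quotient_istopology[OF eq] by simp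

lemma quotient_topspace:
  assumes eq: "equiv (topspace X) R"
  shows "topspace (quotient_topology X R) = topspace X // R"
proof -
  have "openin (quotient_topology X R) (topspace X // R)"
    unfolding quotient_openin[OF eq] using Union_quotient[OF eq] by simp
  then have "topspace X // R \<subseteq> topspace (quotient_topology X R)" by (rule openin_subset)
  moreover have "topspace (quotient_topology X R) \<subseteq> topspace X // R"
    unfolding topspace_def quotient_openin[OF eq] by blast
  ultimately show ?thesis by blast
qed

lemma norm_vec_le_sum: "norm (x::'a::real_normed_vector^'n::finite) \<le> (\<Sum>i\<in>UNIV. norm (x$i))"
  by (simp add: norm_vec_def L2_set_le_sum)

lemma continuous_phi: "continuous_on UNIV (phi :: complex^'s::finite^('r::finite \<times> 't::finite) \<Rightarrow> _)"
proof -
  have e: "phi = (\<lambda>V :: complex^'s^('r \<times> 't). \<chi> p q. \<Sum>i\<in>UNIV. (cnj (V$(i, snd p)$(fst p)) / ssq TYPE('s)) *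
          cnj (cnj (V$(i, snd q)$(fst q)) / ssq TYPE('s)))"
    by (simp add: fun_eq_iff phi_def Mv_def matrix_matrix_mult_def adjoint_mat_def)
  have c: "continuous_on UNIV (\<lambda>V :: complex^'s^('r \<times> 't). \<chi> p q. \<Sum>i\<in>UNIV. (cnj (V$(i, snd p)$(fst p)) / ssq TYPE('s)) *
          cnj (cnj (V$(i, snd q)$(fst q)) / ssq TYPE('s)))"
    by (intro continuous_intros) (auto simp: ssq_def)
  show ?thesis unfolding e by (rule c)
qed

definition Siso :: "(complex^'s::finite^'q::finite) set" where
  "Siso = {V. adjoint_mat V ** V = mat 1}"

lemma compact_Siso: "compact (Siso :: (complex^'s::finite^'q::finite) set)"
  unfolding compact_eq_bounded_closed
proof (rule conjI[rotated])
  have "continuous_on UNIV (\<lambda>V :: complex^'s^'q. adjoint_mat V ** V)"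
  proof -
    have e: "(\<lambda>V :: complex^'s^'q. adjoint_mat V ** V) = (\<lambda>V. \<chi> a b. \<Sum>q\<in>UNIV. cnj (V$q$a) * V$q$b)"
      by (simp add: fun_eq_iff matrix_matrix_mult_def adjoint_mat_def)
    have c: "continuous_on UNIV (\<lambda>V :: complex^'s^'q. \<chi> a b. \<Sum>q\<in>UNIV. cnj (V$q$a) * V$q$b)"
      by (intro continuous_intros)
    show ?thesis unfolding e by (rule c)
  qed
  then show "closed (Siso :: (complex^'s^'q) set)"
    unfolding Siso_def by (intro closed_Collect_eq continuous_intros) auto
next
  have "norm V \<le> real (CARD('q) * CARD('s))" if "V \<in> Siso" for V :: "complex^'s^'q"
  proof -
    have ent: "norm (V$q$k) \<le> 1" for q k
    proof -
      have "(adjoint_mat V ** V)$k$k = 1" using that by (simp add: Siso_def mat_def)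
      then have "(\<Sum>q\<in>UNIV. cnj (V$q$k) * V$q$k) = 1"
        by (simp add: matrix_matrix_mult_def adjoint_mat_def)
      then have "complex_of_real (\<Sum>q\<in>UNIV. (cmod (V$q$k))^2) = 1"
        by (simp add: cnj_mult_self of_real_sum)
      then have s1: "(\<Sum>q\<in>UNIV. (cmod (V$q$k))^2) = 1" by (simp only: of_real_eq_1_iff)
      have "(cmod (V$q$k))^2 \<le> (\<Sum>q\<in>UNIV. (cmod (V$q$k))^2)"
        by (rule member_le_sum) auto
      then have "(cmod (V$q$k))^2 \<le> 1" using s1 by simp
      then show ?thesis by (simp add: power_le_one_iff abs_le_iff power2_le_iff_abs_le)
    qed
    have row: "norm (V$q) \<le> real CARD('s)" for q
    proof -
      have "norm (V$q) \<le> (\<Sum>k\<in>UNIV. norm (V$q$k))" by (rule norm_vec_le_sum)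
      also have "\<dots> \<le> (\<Sum>k\<in>(UNIV::'s set). 1)" by (rule sum_mono) (rule ent)
      finally show ?thesis by simp
    qed
    have "norm V \<le> (\<Sum>q\<in>UNIV. norm (V$q))" by (rule norm_vec_le_sum)
    also have "\<dots> \<le> (\<Sum>q\<in>(UNIV::'q set). real CARD('s))" by (rule sum_mono) (rule row)
    finally show ?thesis by simp
  qed
  then show "bounded (Siso :: (complex^'s^'q) set)" unfolding bounded_iff by blast
qed




theorem lemma8:
  assumes "CARD('s::finite) \<le> CARD('r::finite) * CARD('t::finite)"
    and "CARD('r) \<le> CARD('s) * CARD('t)"
  shows "quotient_topology (subtopology euclidean (V_set :: (complex^'s^('r \<times> 't)) set)) orbit_rel
           homeomorphic_space
         subtopology euclidean (C_set TYPE('r) :: (complex^('s \<times> 't)^('s \<times> 't)) set)"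
proof -
  define Vs where "Vs = (V_set :: (complex^'s^('r \<times> 't)) set)"
  define Cs where "Cs = (C_set TYPE('r) :: (complex^('s \<times> 't)^('s \<times> 't)) set)"
  define R where "R = (orbit_rel :: ((complex^'s^('r \<times> 't)) \<times> _) set)"
  define X where "X = subtopology euclidean Vs"
  define Y where "Y = subtopology euclidean Cs"
  define Q where "Q = quotient_topology X R"
  have R_eq: "R = {(V, W). V \<in> Vs \<and> W \<in> Vs \<and> phi V = phi W}"
    unfolding R_def Vs_def by (rule orbit_eq)
  have tX: "topspace X = Vs" by (simp add: X_def)
  have tY: "topspace Y = Cs" by (simp add: Y_def)
  have eqv: "equiv Vs R"
    unfolding R_eq equiv_def refl_on_def sym_def trans_def by auto
  have eqX: "equiv (topspace X) R" using eqv tX by simp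
  have tQ: "topspace Q = Vs // R" unfolding Q_def quotient_topspace[OF eqX] tX ..
  have oQ: "openin Q U \<longleftrightarrow> U \<subseteq> Vs // R \<and> openin X (\<Union>U)" for U
    unfolding Q_def quotient_openin[OF eqX] tX ..
  have cls: "R``{v} = {w \<in> Vs. phi w = phi v}" if "v \<in> Vs" for v
    using that unfolding R_eq by auto
  define F where "F E = phi (SOME v. v \<in> E)" for E :: "(complex^'s^('r \<times> 't)) set"
  have Fcls: "F (R``{v}) = phi v" if "v \<in> Vs" for v
  proof -
    have "\<exists>w. w \<in> R``{v}" using that cls by auto
    then have "(SOME w. w \<in> R``{v}) \<in> R``{v}" by (rule someI_ex)
    then show ?thesis unfolding F_def using cls[OF that] by simp
  qed
  have phiC: "phi v \<in> Cs" if "v \<in> Vs" for v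
    using that phi_in_C unfolding Vs_def Cs_def by blast
  have surjC: "\<exists>v\<in>Vs. phi v = c" if "c \<in> Cs" for c
    using that C_surj unfolding Vs_def Cs_def by blast
  have contphi: "continuous_on UNIV (phi :: complex^'s^('r \<times> 't) \<Rightarrow> _)" by (rule continuous_phi)
  have closedmap: "closedin Y (phi ` F0)" if "closedin X F0" for F0
  proof -
    have "\<exists>K. closed K \<and> F0 = Vs \<inter> K" using that unfolding X_def closedin_closed .
    then obtain K where K: "closed K" "F0 = Vs \<inter> K" by blast
    have img: "phi ` F0 = Cs \<inter> phi ` (K \<inter> Siso)"
    proof
      show "phi ` F0 \<subseteq> Cs \<inter> phi ` (K \<inter> Siso)"
      proof
        fix c assume "c \<in> phi ` F0"
        then obtain v where v: "v \<in> F0" "c = phi v" by blast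
        then have vV: "v \<in> Vs" "v \<in> K" using K(2) by auto
        then have "v \<in> Siso" unfolding Siso_def Vs_def by (simp add: V_set_iff)
        then show "c \<in> Cs \<inter> phi ` (K \<inter> Siso)" using vV v phiC by blast
      qed
    next
      show "Cs \<inter> phi ` (K \<inter> Siso) \<subseteq> phi ` F0"
      proof
        fix c assume "c \<in> Cs \<inter> phi ` (K \<inter> Siso)"
        then obtain v where v: "v \<in> K" "v \<in> Siso" "phi v \<in> Cs" "c = phi v" by blast
        have iso: "adjoint_mat v ** v = mat 1" using v(2) by (simp add: Siso_def)
        have "phi v \<in> C_set TYPE('r)" using v(3) by (simp add: Cs_def)
        then have "v \<in> Vs" unfolding Vs_def by (rule V_char[OF iso])
        then show "c \<in> phi ` F0" using v K(2) by blast
      qed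
    qed
    have "compact (K \<inter> Siso)" by (rule closed_Int_compact[OF K(1) compact_Siso])
    then have "compact (phi ` (K \<inter> Siso))"
      by (rule compact_continuous_image[OF continuous_on_subset[OF contphi subset_UNIV]])
    then have "closed (phi ` (K \<inter> Siso))" by (rule compact_imp_closed)
    then show ?thesis unfolding Y_def closedin_closed img by blast
  qed
  have hm: "homeomorphic_map Q Y F"
  proof (rule bijective_open_imp_homeomorphic_map)
    show "continuous_map Q Y F"
      unfolding continuous_map_def
    proof (intro conjI allI impI)
      show "F \<in> topspace Q \<rightarrow> topspace Y"
      proof
        fix E assume "E \<in> topspace Q"
        then obtain v where "v \<in> Vs" "E = R``{v}" unfolding tQ by (auto elim: quotientE)
        then show "F E \<in> topspace Y" using Fcls phiC tY by simp
      qed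
    next
      fix Ob assume Ob: "openin Y Ob"
      obtain T where T: "open T" "Ob = Cs \<inter> T" using Ob unfolding Y_def openin_open by blast
      have un: "\<Union>{E \<in> topspace Q. F E \<in> Ob} = Vs \<inter> phi -` T"
      proof
        show "\<Union>{E \<in> topspace Q. F E \<in> Ob} \<subseteq> Vs \<inter> phi -` T"
        proof
          fix x assume "x \<in> \<Union>{E \<in> topspace Q. F E \<in> Ob}"
          then obtain E where E: "E \<in> Vs // R" "F E \<in> Ob" "x \<in> E" unfolding tQ by blast
          then obtain v where v: "v \<in> Vs" "E = R``{v}" by (auto elim: quotientE)
          then show "x \<in> Vs \<inter> phi -` T" using E T cls Fcls by auto
        qed
      next
        show "Vs \<inter> phi -` T \<subseteq> \<Union>{E \<in> topspace Q. F E \<in> Ob}"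
        proof
          fix x assume x: "x \<in> Vs \<inter> phi -` T"
          have a: "R``{x} \<in> topspace Q" using x tQ by (simp add: quotientI)
          have b: "F (R``{x}) \<in> Ob" using x T phiC Fcls by simp
          have c: "x \<in> R``{x}" using x equiv_class_self[OF eqv] by simp
          from a b c show "x \<in> \<Union>{E \<in> topspace Q. F E \<in> Ob}" by blast
        qed
      qed
      have "openin X (Vs \<inter> phi -` T)"
        unfolding X_def openin_open
        by (rule exI[of _ "phi -` T"]) (use open_vimage[OF T(1) contphi] in auto)
      then show "openin Q {E \<in> topspace Q. F E \<in> Ob}" unfolding oQ un using tQ by auto
    qed
  next
    show "open_map Q Y F"
      unfolding open_map_def
    proof (intro allI impI)
      fix U assume U: "openin Q U"
      define W where "W = \<Union>U"
      have UR: "U \<subseteq> Vs // R" and W: "openin X W" using U unfolding oQ W_def by auto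
      have WVs: "W \<subseteq> Vs" using UR Union_quotient[OF eqv] unfolding W_def by blast
      have sat: "w' \<in> W" if sa: "w' \<in> Vs" and sb: "w \<in> W" and sc: "phi w' = phi w" for w w'
      proof -
        obtain E where E: "E \<in> U" "w \<in> E" using sb unfolding W_def by blast
        then obtain v where v: "v \<in> Vs" "E = R``{v}" using UR by (auto elim: quotientE)
        then have "w' \<in> E" using E sa sc cls by auto
        then show ?thesis using E unfolding W_def by blast
      qed
      have FU: "F ` U = phi ` W"
      proof
        show "F ` U \<subseteq> phi ` W"
        proof
          fix c assume "c \<in> F ` U"
          then obtain E where E: "E \<in> U" "c = F E" by blast
          then obtain v where v: "v \<in> Vs" "E = R``{v}" using UR by (auto elim: quotientE)
          have "v \<in> W" using E v eqv unfolding W_def by (auto intro: equiv_class_self)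
          then show "c \<in> phi ` W" using E v Fcls by auto
        qed
      next
        show "phi ` W \<subseteq> F ` U"
        proof
          fix c assume "c \<in> phi ` W"
          then obtain w where w: "w \<in> W" "c = phi w" by blast
          then obtain E where E: "E \<in> U" "w \<in> E" unfolding W_def by blast
          then obtain v where v: "v \<in> Vs" "E = R``{v}" using UR by (auto elim: quotientE)
          have "phi w = phi v" using E v cls by auto
          then have "c = F E" using v w Fcls by simp
          then show "c \<in> F ` U" using E(1) by blast
        qed
      qed
      have compl: "Cs - phi ` W = phi ` (Vs - W)"
      proof
        show "Cs - phi ` W \<subseteq> phi ` (Vs - W)"
        proof
          fix c assume c: "c \<in> Cs - phi ` W"
          then obtain v where "v \<in> Vs" "phi v = c" using surjC by blast
          then show "c \<in> phi ` (Vs - W)" using c by auto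
        qed
      next
        show "phi ` (Vs - W) \<subseteq> Cs - phi ` W"
          using phiC sat by fastforce
      qed
      have "closedin X (Vs - W)" using W tX by (metis closedin_diff closedin_topspace)
      then have "closedin Y (Cs - phi ` W)" unfolding compl by (rule closedmap)
      moreover have "phi ` W \<subseteq> Cs" using WVs phiC by auto
      ultimately have "openin Y (phi ` W)" unfolding openin_closedin_eq tY by simp
      then show "openin Y (F ` U)" unfolding FU .
    qed
  next
    show "F ` topspace Q = topspace Y"
    proof
      show "F ` topspace Q \<subseteq> topspace Y"
      proof
        fix c assume "c \<in> F ` topspace Q"
        then obtain E where "E \<in> Vs // R" "c = F E" unfolding tQ by blast
        then obtain v where "v \<in> Vs" "E = R``{v}" "c = F E" by (auto elim: quotientE)
        then show "c \<in> topspace Y" using Fcls phiC tY by simp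
      qed
    next
      show "topspace Y \<subseteq> F ` topspace Q"
      proof
        fix c assume "c \<in> topspace Y"
        then obtain v where v: "v \<in> Vs" "phi v = c" using surjC tY by blast
        then have "R``{v} \<in> topspace Q" "F (R``{v}) = c" using tQ Fcls by (auto intro: quotientI)
        then show "c \<in> F ` topspace Q" by (metis image_eqI)
      qed
    qed
  next
    show "inj_on F (topspace Q)"
    proof (rule inj_onI)
      fix E1 E2 assume E1: "E1 \<in> topspace Q" and E2: "E2 \<in> topspace Q" and eq: "F E1 = F E2"
      obtain v1 where v1: "v1 \<in> Vs" "E1 = R``{v1}" using E1 unfolding tQ by (auto elim: quotientE)
      obtain v2 where v2: "v2 \<in> Vs" "E2 = R``{v2}" using E2 unfolding tQ by (auto elim: quotientE)
      have "phi v1 = phi v2" using eq v1 v2 Fcls by simp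
      then show "E1 = E2" using v1 v2 cls by simp
    qed
  qed
  have "Q homeomorphic_space Y" by (rule homeomorphic_map_imp_homeomorphic_space[OF hm])
  then show ?thesis unfolding Q_def X_def Y_def R_def Vs_def Cs_def .
qed


end
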